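(* Let $G$ be a cycle graph with $L\ge2$ edges and root $O$, and let all edges have activation probability $p\in(0,1]$. Then the value of the stochastic search game is $$\mathrm{val}(p)=\frac{1}{1-(1-p)^2}+\frac{L-1}{2p}.$$ Moreover, the uniform distribution on the edges (for the hider) and the uniform Eulerian strategy (for the searcher) are optimal.
   Context: Setting: the stochastic search game. Every edge has length $1$ and is active at each stage independently with probability $p$. The hider chooses an edge and stays there. The searcher starts at $O$; at each stage, knowing which edges are currently active, she waits or traverses an active edge incident to her position. The hider's payoff is the expected first time the searcher traverses his edge. Uniform Eulerian strategy on the cycle: at $O$, wait until at least one of the two incident edges is active, and take one chosen uniformly among the active ones. Then go around the cycle in that direction, waiting whenever the next edge is inactive. *)

theory Defs
  imports "HOL-Probability.Probability"
begin

(* Cycle graph with L edges: vertices 0..L-1, root O = vertex 0,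
   edge e (e < L) joins vertex e and vertex (e+1) mod L. *)

type_synonym active = "nat \<Rightarrow> bool"
type_synonym action = "nat option"               (* None = wait, Some e = traverse edge e *)
type_synonym history = "(active \<times> action) list"  (* past stages: active set seen, action taken *)
type_synonym strat = "history \<Rightarrow> active \<Rightarrow> action pmf"

definition move :: "nat \<Rightarrow> nat \<Rightarrow> action \<Rightarrow> nat" where
  "move L v a = (case a of None \<Rightarrow> v | Some e \<Rightarrow> (if v = e then (e + 1) mod L else e))"

definition pos :: "nat \<Rightarrow> history \<Rightarrow> nat" where
  "pos L h = foldl (\<lambda>v x. move L v (snd x)) 0 h"

definition legal :: "nat \<Rightarrow> nat \<Rightarrow> active \<Rightarrow> action \<Rightarrow> bool" where
  "legal L v A a = (case a of None \<Rightarrow> True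
      | Some e \<Rightarrow> e < L \<and> A e \<and> (v = e \<or> v = (e + 1) mod L))"

definition legal_hist :: "nat \<Rightarrow> history \<Rightarrow> bool" where
  "legal_hist L h = (\<forall>i < length h. legal L (pos L (take i h)) (fst (h ! i)) (snd (h ! i)))"

definition searcher_strategy :: "nat \<Rightarrow> strat \<Rightarrow> bool" where
  "searcher_strategy L \<sigma> =
     (\<forall>h A. legal_hist L h \<longrightarrow> (\<forall>a \<in> set_pmf (\<sigma> h A). legal L (pos L h) A a))"

definition hider_strategy :: "nat \<Rightarrow> nat pmf \<Rightarrow> bool" where
  "hider_strategy L q = (set_pmf q \<subseteq> {..<L})"

definition active_pmf :: "real \<Rightarrow> nat \<Rightarrow> active pmf" where
  "active_pmf p L = Pi_pmf {..<L} False (\<lambda>_. bernoulli_pmf p)"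

primrec hist :: "real \<Rightarrow> nat \<Rightarrow> strat \<Rightarrow> nat \<Rightarrow> history pmf" where
  "hist p L \<sigma> 0 = return_pmf []"
| "hist p L \<sigma> (Suc t) = bind_pmf (hist p L \<sigma> t) (\<lambda>h.
       bind_pmf (active_pmf p L) (\<lambda>A. map_pmf (\<lambda>a. h @ [(A, a)]) (\<sigma> h A)))"

definition found :: "nat \<Rightarrow> history \<Rightarrow> bool" where
  "found e h = (\<exists>x \<in> set h. snd x = Some e)"

(* expected first time (stage index) the searcher traverses edge e:
   E[T] = sum_{t>=0} P(T > t) *)
definition search_time :: "real \<Rightarrow> nat \<Rightarrow> strat \<Rightarrow> nat \<Rightarrow> ennreal" where
  "search_time p L \<sigma> e = (\<Sum>t. ennreal (measure_pmf.prob (hist p L \<sigma> t) {h. \<not> found e h}))"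

definition payoff :: "real \<Rightarrow> nat \<Rightarrow> strat \<Rightarrow> nat pmf \<Rightarrow> ennreal" where
  "payoff p L \<sigma> q = (\<integral>\<^sup>+ e. search_time p L \<sigma> e \<partial>measure_pmf q)"

definition lower_value :: "real \<Rightarrow> nat \<Rightarrow> ennreal" where
  "lower_value p L = (\<Squnion>q \<in> {q. hider_strategy L q}. \<Sqinter>\<sigma> \<in> {\<sigma>. searcher_strategy L \<sigma>}. payoff p L \<sigma> q)"

definition upper_value :: "real \<Rightarrow> nat \<Rightarrow> ennreal" where
  "upper_value p L = (\<Sqinter>\<sigma> \<in> {\<sigma>. searcher_strategy L \<sigma>}. \<Squnion>q \<in> {q. hider_strategy L q}. payoff p L \<sigma> q)"

definition first_move :: "history \<Rightarrow> nat option" where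
  "first_move h = (case filter (\<lambda>x. snd x \<noteq> None) h of [] \<Rightarrow> None | x # _ \<Rightarrow> snd x)"

definition euler :: "nat \<Rightarrow> strat" where
  "euler L h A = (case first_move h of
       None \<Rightarrow> (let S = {e. e \<in> {0, L - 1} \<and> A e} in
                 if S = {} then return_pmf None else map_pmf Some (pmf_of_set S))
     | Some e0 \<Rightarrow> (let v = pos L h;
                      e = (if e0 = 0 then v else (v + L - 1) mod L) in
                  if A e then return_pmf (Some e) else return_pmf None))"

end

theory Submission
  imports Defs
begin



abbreviation stp :: "real \<Rightarrow> nat \<Rightarrow> strat \<Rightarrow> history \<Rightarrow> history pmf" where
  "stp p L \<sigma> h \<equiv> bind_pmf (active_pmf p L) (\<lambda>A. map_pmf (\<lambda>a. h @ [(A, a)]) (\<sigma> h A))"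

lemma hist_Suc': "hist p L \<sigma> (Suc t) = bind_pmf (hist p L \<sigma> t) (stp p L \<sigma>)"
  by simp

lemma set_stp: "h' \<in> set_pmf (stp p L \<sigma> h) \<Longrightarrow> \<exists>A a. a \<in> set_pmf (\<sigma> h A) \<and> h' = h @ [(A, a)]"
  by auto

lemma hist_inv:
  assumes "I []" and "\<And>h A a. I h \<Longrightarrow> a \<in> set_pmf (\<sigma> h A) \<Longrightarrow> I (h @ [(A, a)])"
  shows "h \<in> set_pmf (hist p L \<sigma> t) \<Longrightarrow> I h"
proof (induction t arbitrary: h)
  case 0 thus ?case using assms(1) by simp
next
  case (Suc t) thus ?case using assms(2) by auto
qed

lemma pot_upper:
  fixes f u :: "history \<Rightarrow> ennreal"
  assumes "I []" and "\<And>h A a. I h \<Longrightarrow> a \<in> set_pmf (\<sigma> h A) \<Longrightarrow> I (h @ [(A, a)])"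
    and st: "\<And>h. I h \<Longrightarrow> u h + (\<integral>\<^sup>+h'. f h' \<partial>stp p L \<sigma> h) \<le> f h"
  shows "(\<Sum>t. \<integral>\<^sup>+h. u h \<partial>hist p L \<sigma> t) \<le> f []"
proof -
  have one: "(\<integral>\<^sup>+h. u h \<partial>hist p L \<sigma> t) + (\<integral>\<^sup>+h. f h \<partial>hist p L \<sigma> (Suc t)) \<le> (\<integral>\<^sup>+h. f h \<partial>hist p L \<sigma> t)" for t
  proof -
    have "(\<integral>\<^sup>+h. u h \<partial>hist p L \<sigma> t) + (\<integral>\<^sup>+h. f h \<partial>hist p L \<sigma> (Suc t))
        = (\<integral>\<^sup>+h. u h + (\<integral>\<^sup>+h'. f h' \<partial>stp p L \<sigma> h) \<partial>hist p L \<sigma> t)"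
      by (simp only: hist_Suc' nn_integral_bind_pmf) (rule nn_integral_add[symmetric]; simp)
    also have "\<dots> \<le> (\<integral>\<^sup>+h. f h \<partial>hist p L \<sigma> t)"
      by (rule nn_integral_mono_AE, unfold AE_measure_pmf_iff, intro ballI st, rule hist_inv[where I=I, OF assms(1,2)])
    finally show ?thesis .
  qed
  have part: "(\<Sum>t<n. \<integral>\<^sup>+h. u h \<partial>hist p L \<sigma> t) + (\<integral>\<^sup>+h. f h \<partial>hist p L \<sigma> n) \<le> f []" for n
  proof (induction n)
    case 0 thus ?case by simp
  next
    case (Suc n)
    have "(\<Sum>t<Suc n. \<integral>\<^sup>+h. u h \<partial>hist p L \<sigma> t) + (\<integral>\<^sup>+h. f h \<partial>hist p L \<sigma> (Suc n))
      = (\<Sum>t<n. \<integral>\<^sup>+h. u h \<partial>hist p L \<sigma> t) + ((\<integral>\<^sup>+h. u h \<partial>hist p L \<sigma> n) + (\<integral>\<^sup>+h. f h \<partial>hist p L \<sigma> (Suc n)))"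
      by (simp add: add.assoc)
    also have "\<dots> \<le> (\<Sum>t<n. \<integral>\<^sup>+h. u h \<partial>hist p L \<sigma> t) + (\<integral>\<^sup>+h. f h \<partial>hist p L \<sigma> n)"
      by (intro add_left_mono one)
    also have "\<dots> \<le> f []" by (rule Suc.IH)
    finally show ?case .
  qed
  show ?thesis
  proof (rule suminf_le_const)
    show "summable (\<lambda>t. \<integral>\<^sup>+h. u h \<partial>hist p L \<sigma> t)" by (rule summableI)
    fix n show "(\<Sum>t<n. \<integral>\<^sup>+h. u h \<partial>hist p L \<sigma> t) \<le> f []"
      by (rule order_trans[OF _ part[of n]]) simp
  qed
qed

lemma pot_lower:
  fixes f u :: "history \<Rightarrow> ennreal"
  assumes "I []" and "\<And>h A a. I h \<Longrightarrow> a \<in> set_pmf (\<sigma> h A) \<Longrightarrow> I (h @ [(A, a)])"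
    and st: "\<And>h. I h \<Longrightarrow> f h \<le> u h + (\<integral>\<^sup>+h'. f h' \<partial>stp p L \<sigma> h)"
    and bd: "\<And>h. I h \<Longrightarrow> f h \<le> M * u h" and M: "M < top"
    and ub: "\<And>h. u h \<le> 1"
  shows "f [] \<le> (\<Sum>t. \<integral>\<^sup>+h. u h \<partial>hist p L \<sigma> t)"
proof -
  define a where "a t = (\<integral>\<^sup>+h. f h \<partial>hist p L \<sigma> t)" for t
  define b where "b t = (\<integral>\<^sup>+h. u h \<partial>hist p L \<sigma> t)" for t
  have inv: "h \<in> set_pmf (hist p L \<sigma> t) \<Longrightarrow> I h" for h t
    by (rule hist_inv[where I=I, OF assms(1,2)])
  have one: "a t \<le> b t + a (Suc t)" for t
  proof -
    have "a t \<le> (\<integral>\<^sup>+h. u h + (\<integral>\<^sup>+h'. f h' \<partial>stp p L \<sigma> h) \<partial>hist p L \<sigma> t)"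
      unfolding a_def
      by (rule nn_integral_mono_AE, unfold AE_measure_pmf_iff, intro ballI st inv)
    also have "\<dots> = b t + a (Suc t)"
      unfolding a_def b_def
      by (simp only: hist_Suc' nn_integral_bind_pmf) (rule nn_integral_add; simp)
    finally show ?thesis .
  qed
  have part: "f [] \<le> (\<Sum>t<n. b t) + a n" for n
  proof (induction n)
    case 0 thus ?case by (simp add: a_def)
  next
    case (Suc n)
    have "f [] \<le> (\<Sum>t<n. b t) + a n" by (rule Suc.IH)
    also have "\<dots> \<le> (\<Sum>t<n. b t) + (b n + a (Suc n))" by (intro add_left_mono one)
    also have "\<dots> = (\<Sum>t<Suc n. b t) + a (Suc n)" by (simp add: add.assoc)
    finally show ?case .
  qed
  have an: "a n \<le> M * b n" for n
  proof -
    have "a n \<le> (\<integral>\<^sup>+h. M * u h \<partial>hist p L \<sigma> n)"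
      unfolding a_def
      by (rule nn_integral_mono_AE, unfold AE_measure_pmf_iff, intro ballI bd inv)
    also have "\<dots> = M * b n" unfolding b_def by (rule nn_integral_cmult) simp
    finally show ?thesis .
  qed
  have bfin: "b n \<le> 1" for n
  proof -
    have "b n \<le> (\<integral>\<^sup>+h. 1 \<partial>hist p L \<sigma> n)"
      unfolding b_def by (rule nn_integral_mono) (rule ub)
    also have "\<dots> = 1" by simp
    finally show ?thesis .
  qed
  show ?thesis
  proof (cases "(\<Sum>t. b t) = top")
    case True thus ?thesis by (simp add: b_def)
  next
    case False
    define r where "r t = enn2real (b t)" for t
    have br: "b t = ennreal (r t)" for t
      unfolding r_def using bfin[of t] by (simp add: ennreal_enn2real_if top_unique)
      (metis enn2real_nonneg ennreal_enn2real_if ennreal_one_neq_top top_unique)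
    have "summable r"
    proof (rule summable_suminf_not_top)
      show "0 \<le> r i" for i by (simp add: r_def)
      show "(\<Sum>i. ennreal (r i)) \<noteq> top" using False by (simp add: br)
    qed
    hence "r \<longlonglongrightarrow> 0" by (rule summable_LIMSEQ_zero)
    hence "b \<longlonglongrightarrow> 0" unfolding br by (metis ennreal_0 tendsto_ennrealI)
    hence "(\<lambda>n. M * b n) \<longlonglongrightarrow> M * 0" by (intro ennreal_tendsto_cmult M)
    hence lim: "(\<lambda>n. (\<Sum>t<n. b t) + M * b n) \<longlonglongrightarrow> (\<Sum>t. b t) + M * 0"
      by (intro tendsto_add summable_LIMSEQ summableI)
    have "f [] \<le> (\<Sum>t. b t) + M * 0"
      by (rule LIMSEQ_le_const[OF lim]) (meson order_trans part an add_left_mono)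
    thus ?thesis by (simp add: b_def)
  qed
qed




lemma found_append[simp]: "found e (h @ [x]) \<longleftrightarrow> found e h \<or> snd x = Some e"
  by (auto simp: found_def)

lemma found_Nil[simp]: "\<not> found e []" by (simp add: found_def)

lemma pos_Nil[simp]: "pos L [] = 0" by (simp add: pos_def)

lemma pos_append[simp]: "pos L (h @ [x]) = move L (pos L h) (snd x)"
  by (simp add: pos_def)

lemma legal_hist_Nil[simp]: "legal_hist L []" by (simp add: legal_hist_def)

lemma legal_hist_append[simp]:
  "legal_hist L (h @ [x]) \<longleftrightarrow> legal_hist L h \<and> legal L (pos L h) (fst x) (snd x)"
  unfolding legal_hist_def
  by (auto simp: nth_append less_Suc_eq)

lemma first_move_Nil[simp]: "first_move [] = None" by (simp add: first_move_def)

lemma first_move_append[simp]: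
  "first_move (h @ [x]) = (if first_move h = None then snd x else first_move h)"
proof (cases "filter (\<lambda>x. snd x \<noteq> None) h")
  case (Cons y ys)
  have "y \<in> set (filter (\<lambda>x. snd x \<noteq> None) h)" using Cons by simp
  hence "snd y \<noteq> None" by simp
  thus ?thesis using Cons by (auto simp: first_move_def)
qed (auto simp: first_move_def split: list.splits)

lemma first_move_None_pos: "first_move h = None \<Longrightarrow> pos L h = 0"
proof (induction h rule: rev_induct)
  case (snoc x h) thus ?case by (auto simp: move_def split: if_splits)
qed simp

lemma first_move_None_found: "first_move h = None \<Longrightarrow> \<not> found e h"
proof (induction h rule: rev_induct)
  case (snoc x h) thus ?case by (auto split: if_splits)
qed simp

lemma legal_pos: "L > 0 \<Longrightarrow> legal_hist L h \<Longrightarrow> pos L h < L"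
proof (induction h rule: rev_induct)
  case (snoc x h) thus ?case
    by (auto simp: move_def legal_def split: option.splits)
qed simp

lemma legal_found: "legal_hist L h \<Longrightarrow> found e h \<Longrightarrow> e < L"
proof (induction h rule: rev_induct)
  case (snoc x h) thus ?case
    by (auto simp: legal_def split: option.splits)
qed simp

lemma predmod: "(v::nat) < L \<Longrightarrow> (v + L - 1) mod L = (if v = 0 then L - 1 else v - 1)"
proof (cases v)
  case (Suc w)
  assume "v < L"
  hence "w < L" using Suc by simp
  thus ?thesis using Suc by simp
qed simp

lemma sucmod: "(e::nat) < L \<Longrightarrow> (e + 1) mod L = (if e + 1 = L then 0 else e + 1)"
  by (cases "e + 1 = L") auto

lemma inc_iff:
  assumes "(v::nat) < L" "e < L"
  shows "(v = e \<or> v = (e + 1) mod L) \<longleftrightarrow> (e = v \<or> e = (v + L - 1) mod L)"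
proof -
  have P: "(v + L - 1) mod L = (if v = 0 then L - 1 else v - 1)" by (rule predmod[OF assms(1)])
  have S: "(e + 1) mod L = (if e + 1 = L then 0 else e + 1)" by (rule sucmod[OF assms(2)])
  show ?thesis unfolding P S using assms by auto
qed

lemma last_move:
  assumes "legal_hist L h" "found e h"
  shows "\<exists>el. found el h \<and> el < L \<and> (pos L h = el \<or> pos L h = (el + 1) mod L)"
  using assms
proof (induction h rule: rev_induct)
  case Nil thus ?case by simp
next
  case (snoc x h)
  show ?case
  proof (cases "snd x")
    case None
    with snoc show ?thesis by (auto simp: move_def)
  next
    case (Some e')
    with snoc.prems have l: "e' < L" "pos L h = e' \<or> pos L h = (e' + 1) mod L"
      by (auto simp: legal_def)
    thus ?thesis using Some by (intro exI[of _ e']) (auto simp: move_def)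
  qed
qed

lemma euler_legal:
  assumes "L \<ge> 2"
  shows "searcher_strategy L (euler L)"
  unfolding searcher_strategy_def
proof (intro allI impI ballI)
  fix h A a assume lh: "legal_hist L h" and a: "a \<in> set_pmf (euler L h A)"
  have vL: "pos L h < L" using legal_pos[OF _ lh] assms by simp
  show "legal L (pos L h) A a"
  proof (cases "first_move h")
    case None
    hence p0: "pos L h = 0" by (rule first_move_None_pos)
    have fin: "finite {e. e \<in> {0, L - 1} \<and> A e}" by (rule finite_subset[of _ "{0, L-1}"]) auto
    have "a = None \<or> (a = Some 0 \<and> A 0) \<or> (a = Some (L - 1) \<and> A (L - 1))"
      using a None fin by (auto simp: euler_def Let_def split: if_splits)
    thus ?thesis using assms p0 by (auto simp: legal_def)
  next
    case (Some e0)
    define e where "e = (if e0 = 0 then pos L h else (pos L h + L - 1) mod L)"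
    have "a = None \<or> (a = Some e \<and> A e)"
      using a Some by (auto simp: euler_def e_def Let_def split: if_splits)
    moreover have "e < L" "pos L h = e \<or> pos L h = (e + 1) mod L"
      using inc_iff[OF vL, of e] vL assms by (auto simp: e_def)
    ultimately show ?thesis by (auto simp: legal_def)
  qed
qed




lemma active_comp:
  assumes "e < L"
  shows "map_pmf (\<lambda>A. A e) (active_pmf p L) = bernoulli_pmf p"
  unfolding active_pmf_def using assms by (subst Pi_pmf_component) auto

lemma active_pair:
  assumes "i < L" "j < L" "i \<noteq> j"
  shows "map_pmf (\<lambda>A. (A i, A j)) (active_pmf p L) = pair_pmf (bernoulli_pmf p) (bernoulli_pmf p)"
proof -
  have U: "{..<L} = insert i ({..<L} - {i})" using assms by auto
  have "active_pmf p L = map_pmf (\<lambda>(y,f). f(i:=y)) (pair_pmf (bernoulli_pmf p) (Pi_pmf ({..<L} - {i}) False (\<lambda>_. bernoulli_pmf p)))"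
    unfolding active_pmf_def by (subst U, subst Pi_pmf_insert) auto
  hence "map_pmf (\<lambda>A. (A i, A j)) (active_pmf p L)
      = map_pmf (apsnd (\<lambda>f. f j)) (pair_pmf (bernoulli_pmf p) (Pi_pmf ({..<L} - {i}) False (\<lambda>_. bernoulli_pmf p)))"
    using assms by (simp add: pmf.map_comp o_def case_prod_unfold apsnd_def map_prod_def)
  also have "\<dots> = pair_pmf (bernoulli_pmf p) (map_pmf (\<lambda>f. f j) (Pi_pmf ({..<L} - {i}) False (\<lambda>_. bernoulli_pmf p)))"
    by (rule pair_map_pmf2[symmetric])
  also have "map_pmf (\<lambda>f. f j) (Pi_pmf ({..<L} - {i}) False (\<lambda>_. bernoulli_pmf p)) = bernoulli_pmf p"
    using assms by (subst Pi_pmf_component) auto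
  finally show ?thesis .
qed

lemma int1:
  assumes "e < L" "0 \<le> p" "p \<le> 1" "\<And>b. 0 \<le> G b"
  shows "(\<integral>\<^sup>+A. ennreal (G (A e)) \<partial>active_pmf p L) = ennreal (G True * p + G False * (1 - p))"
proof -
  have "(\<integral>\<^sup>+A. ennreal (G (A e)) \<partial>active_pmf p L) = (\<integral>\<^sup>+x. ennreal (G x) \<partial>map_pmf (\<lambda>A. A e) (active_pmf p L))"
    by simp
  also have "\<dots> = (\<integral>\<^sup>+x. ennreal (G x) \<partial>bernoulli_pmf p)" using assms by (simp add: active_comp)
  also have "\<dots> = ennreal (G True * p + G False * (1 - p))"
    using assms by (simp add: ennreal_mult'' ennreal_plus[symmetric])
  finally show ?thesis .
qed

lemma int2:
  assumes "i < L" "j < L" "i \<noteq> j" "0 \<le> p" "p \<le> 1" "\<And>b c. 0 \<le> G b c"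
  shows "(\<integral>\<^sup>+A. ennreal (G (A i) (A j)) \<partial>active_pmf p L)
     = ennreal (G True True * p * p + G True False * p * (1 - p) + G False True * (1 - p) * p + G False False * (1 - p) * (1 - p))"
proof -
  have "(\<integral>\<^sup>+A. ennreal (G (A i) (A j)) \<partial>active_pmf p L) = (\<integral>\<^sup>+x. ennreal (case_prod G x) \<partial>map_pmf (\<lambda>A. (A i, A j)) (active_pmf p L))"
    by simp
  also have "\<dots> = (\<integral>\<^sup>+x. ennreal (case_prod G x) \<partial>pair_pmf (bernoulli_pmf p) (bernoulli_pmf p))" using assms by (simp add: active_pair)
  also have "\<dots> = (\<integral>\<^sup>+a. \<integral>\<^sup>+b. ennreal (G a b) \<partial>bernoulli_pmf p \<partial>bernoulli_pmf p)"
    by (simp add: nn_integral_pair_pmf')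
  also have "\<dots> = (\<integral>\<^sup>+a. ennreal (G a True * p + G a False * (1 - p)) \<partial>bernoulli_pmf p)"
    using assms by (simp add: ennreal_mult'' ennreal_plus[symmetric])
  also have "\<dots> = ennreal ((G True True * p + G True False * (1 - p)) * p + (G False True * p + G False False * (1 - p)) * (1 - p))"
    using assms by (simp add: ennreal_mult'' ennreal_plus[symmetric])
  also have "\<dots> = ennreal (G True True * p * p + G True False * p * (1 - p) + G False True * (1 - p) * p + G False False * (1 - p) * (1 - p))"
    by (simp add: algebra_simps)
  finally show ?thesis .
qed

lemma emeasure_int: "emeasure (measure_pmf M) {x. P x} = (\<integral>\<^sup>+x. ennreal (if P x then 1 else 0) \<partial>M)"
proof -
  have "(\<integral>\<^sup>+x. ennreal (if P x then 1 else 0) \<partial>M) = (\<integral>\<^sup>+x. indicator {x. P x} x \<partial>M)"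
    by (intro nn_integral_cong) (simp add: indicator_def)
  also have "\<dots> = emeasure M {x. P x}" by (rule nn_integral_indicator) simp
  finally show ?thesis by simp
qed

lemma prob1:
  assumes "e < L" "0 \<le> p" "p \<le> 1"
  shows "emeasure (measure_pmf (active_pmf p L)) {A. A e} = ennreal p"
proof -
  have "emeasure (measure_pmf (active_pmf p L)) {A. A e} = (\<integral>\<^sup>+A. ennreal (if A e then 1 else 0) \<partial>active_pmf p L)"
    by (rule emeasure_int)
  also have "\<dots> = ennreal p" using assms by (subst int1[where G="\<lambda>b. if b then 1 else 0"]) auto
  finally show ?thesis .
qed

lemma prob2:
  assumes "i < L" "j < L" "i \<noteq> j" "0 \<le> p" "p \<le> 1"
  shows "emeasure (measure_pmf (active_pmf p L)) {A. A i \<or> A j} = ennreal (1 - (1 - p)^2)"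
proof -
  have "emeasure (measure_pmf (active_pmf p L)) {A. A i \<or> A j} = (\<integral>\<^sup>+A. ennreal (if A i \<or> A j then 1 else 0) \<partial>active_pmf p L)"
    by (rule emeasure_int)
  also have "\<dots> = ennreal (1 - (1 - p)^2)" using assms
    by (subst int2[where G="\<lambda>b c. if b \<or> c then 1 else 0"]) (auto simp: algebra_simps power2_eq_square)
  finally show ?thesis .
qed





definition kf :: "nat \<Rightarrow> history \<Rightarrow> nat" where
  "kf L h = card {e\<in>{..<L}. found e h}"

definition val :: "real \<Rightarrow> nat \<Rightarrow> real" where
  "val p L = 1 / (1 - (1 - p)^2) + (real L - 1) / (2 * p)"

definition Phi :: "real \<Rightarrow> nat \<Rightarrow> nat \<Rightarrow> real" where
  "Phi p L k = (if k = 0 then val p L else (real L - real k) * (real L - real k + 1) / (2 * real L * p))"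

definition ucnt :: "nat \<Rightarrow> history \<Rightarrow> real" where
  "ucnt L h = real (card {e\<in>{..<L}. \<not> found e h}) / real L"

lemma kf_le: "kf L h \<le> L"
  unfolding kf_def by (rule order_trans[OF card_mono[of "{..<L}"]]) auto

lemma ucnt_eq: "ucnt L h = (real L - real (kf L h)) / real L"
proof -
  have "{e\<in>{..<L}. \<not> found e h} = {..<L} - {e\<in>{..<L}. found e h}" by auto
  moreover have fin: "finite {e\<in>{..<L}. found e h}" by simp
  ultimately have "card {e\<in>{..<L}. \<not> found e h} = L - kf L h"
    unfolding kf_def using card_Diff_subset[OF fin, of "{..<L}"] by auto
  thus ?thesis unfolding ucnt_def using kf_le[of L h] by (simp add: of_nat_diff)
qed

lemma q_pos: "0 < (p::real) \<Longrightarrow> p \<le> 1 \<Longrightarrow> 0 < 1 - (1 - p)^2"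
proof -
  assume "0 < p" "p \<le> 1"
  hence "1 - (1 - p)^2 = p * (2 - p)" by (simp add: power2_eq_square algebra_simps)
  thus ?thesis using \<open>0 < p\<close> \<open>p \<le> 1\<close> by simp
qed

lemma val_pos: "L \<ge> 2 \<Longrightarrow> 0 < p \<Longrightarrow> p \<le> 1 \<Longrightarrow> 0 < val p L"
  unfolding val_def using q_pos[of p] by (intro add_pos_nonneg) auto

lemma Phi_nonneg: "L \<ge> 2 \<Longrightarrow> 0 < p \<Longrightarrow> p \<le> 1 \<Longrightarrow> k \<le> L \<Longrightarrow> 0 \<le> Phi p L k"
  unfolding Phi_def using val_pos[of L p] by (auto intro!: divide_nonneg_pos)

lemma Phi_le_val: "L \<ge> 2 \<Longrightarrow> 0 < p \<Longrightarrow> p \<le> 1 \<Longrightarrow> k \<le> L \<Longrightarrow> Phi p L k \<le> val p L"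
proof -
  assume a: "L \<ge> 2" "0 < p" "p \<le> 1" "k \<le> L"
  show ?thesis
  proof (cases "k = 0")
    case False
    have m: "(real L - real k) * (real L - real k + 1) \<le> (real L - 1) * real L"
      using a False by (intro mult_mono) auto
    have "Phi p L k = (real L - real k) * (real L - real k + 1) / (2 * real L * p)"
      using False by (simp add: Phi_def)
    also have "\<dots> \<le> (real L - 1) * real L / (2 * real L * p)"
      by (rule divide_right_mono[OF m]) (use a in simp)
    also have "\<dots> = (real L - 1) / (2 * p)" using a by simp
    also have "\<dots> \<le> val p L" unfolding val_def using q_pos[of p] a by simp
    finally show ?thesis .
  qed (simp add: Phi_def)
qed

lemma Phi_L: "L \<ge> 2 \<Longrightarrow> Phi p L L = 0" by (simp add: Phi_def)

lemma Phi_step: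
  assumes "L \<ge> 2" "0 < p" "p \<le> 1" "k < L"
  shows "Phi p L k = Phi p L (Suc k) + (if k = 0 then 1 / (1 - (1 - p)^2) else (real L - real k) / (real L * p))"
proof (cases "k = 0")
  case True
  thus ?thesis using assms by (simp add: Phi_def val_def field_simps)
next
  case False
  thus ?thesis using assms by (simp add: Phi_def field_simps)
qed

lemma fm_found: "first_move h \<noteq> None \<Longrightarrow> \<exists>e. found e h"
proof (induction h rule: rev_induct)
  case (snoc x h) thus ?case by (cases "first_move h") (auto split: if_splits)
qed simp


lemma lower_step:
  assumes L2: "L \<ge> 2" and p: "0 < p" "p \<le> 1" and ss: "searcher_strategy L \<sigma>"
    and lh: "legal_hist L h"
  shows "ennreal (Phi p L (kf L h)) \<le> ennreal (ucnt L h) + (\<integral>\<^sup>+h'. ennreal (Phi p L (kf L h')) \<partial>stp p L \<sigma> h)"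
proof -
  define k where "k = kf L h"
  show ?thesis
  proof (cases "k = L")
    case True thus ?thesis using L2 unfolding k_def by (simp add: Phi_L)
  next
    case False
    hence kL: "k < L" using kf_le[of L h] k_def by simp
    define q where "q = 1 - (1 - p)^2"
    define D where "D = (if k = 0 then 1 / q else (real L - real k) / (real L * p))"
    define pk where "pk = (if k = 0 then q else p)"
    define B where "B = {A. \<exists>e'<L. A e' \<and> (pos L h = e' \<or> pos L h = (e' + 1) mod L) \<and> \<not> found e' h}"
    have qpos: "0 < q" using q_pos p unfolding q_def by auto
    have Dnn: "0 \<le> D" using qpos p kL unfolding D_def by auto
    have pknn: "0 \<le> pk" using qpos p unfolding pk_def by auto
    have Dpk: "D * pk = ucnt L h" unfolding D_def pk_def ucnt_eq k_def[symmetric] using qpos p L2 by auto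
    have Pstep: "Phi p L k = Phi p L (Suc k) + D" unfolding D_def q_def using Phi_step[OF L2 p kL] .
    have pw: "Phi p L k \<le> Phi p L (kf L (h @ [(A, a)])) + D * (if A \<in> B then 1 else 0)"
      if a: "a \<in> set_pmf (\<sigma> h A)" for A a
    proof -
      have lg: "legal L (pos L h) A a" using ss lh a unfolding searcher_strategy_def by blast
      show ?thesis
      proof (cases "\<exists>e'. a = Some e' \<and> \<not> found e' h")
        case True
        then obtain e' where e': "a = Some e'" "\<not> found e' h" by blast
        have e'L: "e' < L" "A e'" "pos L h = e' \<or> pos L h = (e' + 1) mod L"
          using lg e' by (auto simp: legal_def)
        have AB: "A \<in> B" using e' e'L unfolding B_def by blast
        have "{e\<in>{..<L}. found e (h @ [(A, a)])} = insert e' {e\<in>{..<L}. found e h}"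
          using e' e'L by auto
        hence "kf L (h @ [(A, a)]) = Suc k" unfolding kf_def k_def using e' by simp
        thus ?thesis using Pstep AB by simp
      next
        case False
        have "{e\<in>{..<L}. found e (h @ [(A, a)])} = {e\<in>{..<L}. found e h}" using False by auto
        hence "kf L (h @ [(A, a)]) = k" unfolding kf_def k_def by simp
        thus ?thesis using Dnn by simp
      qed
    qed
    have PB: "emeasure (measure_pmf (active_pmf p L)) B \<le> ennreal pk"
    proof (cases "k = 0")
      case True
      have "first_move h = None"
      proof (rule ccontr)
        assume "first_move h \<noteq> None"
        then obtain e where "found e h" using fm_found by blast
        hence "e \<in> {e\<in>{..<L}. found e h}" using legal_found[OF lh] by auto
        hence "card {e\<in>{..<L}. found e h} > 0" by (subst card_gt_0_iff) auto
        thus False using True unfolding k_def kf_def by linarith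
      qed
      hence p0: "pos L h = 0" by (rule first_move_None_pos)
      have "B \<subseteq> {A. A 0 \<or> A (L - 1)}"
      proof
        fix A assume "A \<in> B"
        then obtain e' where e': "e' < L" "A e'" "pos L h = e' \<or> pos L h = (e' + 1) mod L"
          unfolding B_def by blast
        have "e' = 0 \<or> e' = (0 + L - 1) mod L" using inc_iff[of 0 L e'] e' p0 L2 by auto
        thus "A \<in> {A. A 0 \<or> A (L - 1)}" using e' L2 by auto
      qed
      hence "emeasure (measure_pmf (active_pmf p L)) B \<le> emeasure (measure_pmf (active_pmf p L)) {A. A 0 \<or> A (L - 1)}"
        by (rule emeasure_mono) simp
      also have "\<dots> = ennreal (1 - (1 - p)^2)" using L2 p by (intro prob2) auto
      finally show ?thesis using True unfolding pk_def q_def by simp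
    next
      case False
      hence "card {e\<in>{..<L}. found e h} \<noteq> 0" unfolding k_def kf_def .
      hence "{e\<in>{..<L}. found e h} \<noteq> {}"
      proof (intro notI)
        assume c: "card {e\<in>{..<L}. found e h} \<noteq> 0" and s: "{e\<in>{..<L}. found e h} = {}"
        from c show False by (simp only: s card.empty)
      qed
      then obtain e0 where "found e0 h" by blast
      obtain el where el: "found el h" "el < L" "pos L h = el \<or> pos L h = (el + 1) mod L"
        using last_move[OF lh \<open>found e0 h\<close>] by blast
      define v where "v = pos L h"
      have vL: "v < L" using legal_pos[OF _ lh] L2 unfolding v_def by simp
      define es where "es = (if el = v then (v + L - 1) mod L else v)"
      have esL: "es < L" unfolding es_def using vL by auto
      have "B \<subseteq> {A. A es}"
      proof
        fix A assume "A \<in> B"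
        then obtain e' where e': "e' < L" "A e'" "v = e' \<or> v = (e' + 1) mod L" "\<not> found e' h"
          unfolding B_def v_def by blast
        have "e' = v \<or> e' = (v + L - 1) mod L" using inc_iff[OF vL e'(1)] e'(3) by simp
        moreover have "el = v \<or> el = (v + L - 1) mod L" using inc_iff[OF vL el(2)] el(3) v_def by simp
        moreover have "e' \<noteq> el" using e'(4) el(1) by auto
        ultimately have "e' = es" unfolding es_def by auto
        thus "A \<in> {A. A es}" using e' by simp
      qed
      hence "emeasure (measure_pmf (active_pmf p L)) B \<le> emeasure (measure_pmf (active_pmf p L)) {A. A es}"
        by (rule emeasure_mono) simp
      also have "\<dots> = ennreal p" using prob1[OF esL] p by simp
      finally show ?thesis using False unfolding pk_def by simp
    qed
    have inner: "ennreal (Phi p L k) \<le> (\<integral>\<^sup>+a. ennreal (Phi p L (kf L (h @ [(A, a)]))) \<partial>\<sigma> h A)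
        + ennreal (D * (if A \<in> B then 1 else 0))" for A
    proof -
      have "ennreal (Phi p L k) = (\<integral>\<^sup>+a. ennreal (Phi p L k) \<partial>\<sigma> h A)" by simp
      also have "\<dots> \<le> (\<integral>\<^sup>+a. ennreal (Phi p L (kf L (h @ [(A, a)]))) + ennreal (D * (if A \<in> B then 1 else 0)) \<partial>\<sigma> h A)"
      proof (rule nn_integral_mono_AE, unfold AE_measure_pmf_iff, intro ballI)
        fix a assume "a \<in> set_pmf (\<sigma> h A)"
        hence "ennreal (Phi p L k) \<le> ennreal (Phi p L (kf L (h @ [(A, a)])) + D * (if A \<in> B then 1 else 0))"
          by (intro ennreal_leI) (rule pw)
        also have "\<dots> = ennreal (Phi p L (kf L (h @ [(A, a)]))) + ennreal (D * (if A \<in> B then 1 else 0))"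
          by (rule ennreal_plus) (use Phi_nonneg[OF L2 p kf_le] Dnn in auto)
        finally show "ennreal (Phi p L k) \<le> ennreal (Phi p L (kf L (h @ [(A, a)]))) + ennreal (D * (if A \<in> B then 1 else 0))" .
      qed
      also have "\<dots> = (\<integral>\<^sup>+a. ennreal (Phi p L (kf L (h @ [(A, a)]))) \<partial>\<sigma> h A) + ennreal (D * (if A \<in> B then 1 else 0))"
        by (subst nn_integral_add) simp_all
      finally show ?thesis .
    qed
    have intB: "(\<integral>\<^sup>+A. ennreal (D * (if A \<in> B then 1 else 0)) \<partial>active_pmf p L) = ennreal D * emeasure (measure_pmf (active_pmf p L)) B"
    proof -
      have "(\<integral>\<^sup>+A. ennreal (D * (if A \<in> B then 1 else 0)) \<partial>active_pmf p L) = (\<integral>\<^sup>+A. ennreal D * indicator B A \<partial>active_pmf p L)"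
        by (intro nn_integral_cong) (simp add: indicator_def)
      also have "\<dots> = ennreal D * emeasure (measure_pmf (active_pmf p L)) B" by (subst nn_integral_cmult_indicator) simp_all
      finally show ?thesis .
    qed
    define X where "X A = (\<integral>\<^sup>+a. ennreal (Phi p L (kf L (h @ [(A, a)]))) \<partial>\<sigma> h A)" for A
    define Y where "Y A = ennreal (D * (if A \<in> B then 1 else 0))" for A
    have stpI: "(\<integral>\<^sup>+h'. ennreal (Phi p L (kf L h')) \<partial>stp p L \<sigma> h) = (\<integral>\<^sup>+A. X A \<partial>active_pmf p L)"
      by (simp add: X_def)
    have addXY: "(\<integral>\<^sup>+A. X A + Y A \<partial>active_pmf p L) = (\<integral>\<^sup>+A. X A \<partial>active_pmf p L) + (\<integral>\<^sup>+A. Y A \<partial>active_pmf p L)"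
      by (rule nn_integral_add) simp_all
    have "ennreal (Phi p L k) = (\<integral>\<^sup>+A. ennreal (Phi p L k) \<partial>active_pmf p L)" by simp
    also have "\<dots> \<le> (\<integral>\<^sup>+A. X A + Y A \<partial>active_pmf p L)"
      unfolding X_def Y_def by (rule nn_integral_mono) (rule inner)
    also have "\<dots> = (\<integral>\<^sup>+A. X A \<partial>active_pmf p L) + (\<integral>\<^sup>+A. Y A \<partial>active_pmf p L)"
      by (rule addXY)
    also have "\<dots> = (\<integral>\<^sup>+h'. ennreal (Phi p L (kf L h')) \<partial>stp p L \<sigma> h) + ennreal D * emeasure (measure_pmf (active_pmf p L)) B"
      unfolding stpI Y_def intB ..
    also have "\<dots> \<le> (\<integral>\<^sup>+h'. ennreal (Phi p L (kf L h')) \<partial>stp p L \<sigma> h) + ennreal D * ennreal pk"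
      by (intro add_left_mono mult_left_mono PB) simp
    also have "\<dots> = (\<integral>\<^sup>+h'. ennreal (Phi p L (kf L h')) \<partial>stp p L \<sigma> h) + ennreal (ucnt L h)"
      unfolding ennreal_mult[OF Dnn pknn, symmetric] Dpk ..
    finally have "ennreal (Phi p L k) \<le> (\<integral>\<^sup>+h'. ennreal (Phi p L (kf L h')) \<partial>stp p L \<sigma> h) + ennreal (ucnt L h)" .
    thus ?thesis unfolding k_def by (subst add.commute)
  qed
qed




definition Psi :: "real \<Rightarrow> nat \<Rightarrow> nat \<Rightarrow> history \<Rightarrow> real" where
  "Psi p L e h = (if found e h then 0 else if first_move h = None then val p L
     else if first_move h = Some 0 then (real e + 1 - real (pos L h)) / p
     else (real (pos L h) - real e) / p)"

definition Inv :: "nat \<Rightarrow> nat \<Rightarrow> history \<Rightarrow> bool" where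
  "Inv L e h = (found e h \<or> first_move h = None
     \<or> (first_move h = Some 0 \<and> 1 \<le> pos L h \<and> pos L h \<le> e)
     \<or> (first_move h = Some (L - 1) \<and> e < pos L h \<and> pos L h \<le> L - 1))"

lemma move_None[simp]: "move L v None = v" by (simp add: move_def)

lemma filt2: "{e. e \<in> {a, b} \<and> P e} = (if P a then {a} else {}) \<union> (if P b then {b} else {})"
  by auto

lemma euler_None:
  assumes "L \<ge> 2" "first_move h = None"
  shows "euler L h A = (if \<not> A 0 \<and> \<not> A (L - 1) then return_pmf None
     else if A 0 \<and> \<not> A (L - 1) then return_pmf (Some 0)
     else if \<not> A 0 \<and> A (L - 1) then return_pmf (Some (L - 1))
     else map_pmf Some (pmf_of_set {0, L - 1}))"
proof -
  have "{e. e \<in> {0, L - 1} \<and> A e} = (if A 0 then {0} else {}) \<union> (if A (L - 1) then {L - 1} else {})"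
    by (rule filt2)
  thus ?thesis using assms by (auto simp: euler_def Let_def pmf_of_set_singleton insert_commute)
qed

lemma euler_Some0:
  assumes "first_move h = Some 0"
  shows "euler L h A = (if A (pos L h) then return_pmf (Some (pos L h)) else return_pmf None)"
  using assms by (simp add: euler_def Let_def)

lemma euler_Some:
  assumes "first_move h = Some e0" "e0 \<noteq> 0"
  shows "euler L h A = (if A ((pos L h + L - 1) mod L) then return_pmf (Some ((pos L h + L - 1) mod L)) else return_pmf None)"
  using assms by (simp add: euler_def Let_def)

lemma inv_pres:
  assumes L2: "L \<ge> 2" and eL: "e < L" and I: "Inv L e h" and a: "a \<in> set_pmf (euler L h A)"
  shows "Inv L e (h @ [(A, a)])"
proof (cases "found e h")
  case True thus ?thesis by (simp add: Inv_def)
next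
  case nf: False
  show ?thesis
  proof (cases "first_move h")
    case None
    have p0: "pos L h = 0" using None by (rule first_move_None_pos)
    have "a = None \<or> a = Some 0 \<or> a = Some (L - 1)"
      using a euler_None[OF L2 None, of A] by (auto split: if_splits)
    moreover have "move L 0 (Some 0) = 1" using L2 by (simp add: move_def)
    moreover have "move L 0 (Some (L - 1)) = L - 1" using L2 by (simp add: move_def)
    ultimately show ?thesis using None p0 eL L2 by (auto simp: Inv_def)
  next
    case (Some e0)
    show ?thesis
    proof (cases "e0 = 0")
      case True
      hence v: "1 \<le> pos L h" "pos L h \<le> e" using I nf Some by (auto simp: Inv_def)
      have "a = None \<or> a = Some (pos L h)"
        using a euler_Some0[of h L A] Some True by (auto split: if_splits)
      moreover have "pos L h < e \<Longrightarrow> move L (pos L h) (Some (pos L h)) = pos L h + 1" using v eL by (simp add: move_def)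
      ultimately show ?thesis using Some True v by (cases "pos L h = e") (auto simp: Inv_def)
    next
      case False
      hence e0: "e0 = L - 1" and v: "e < pos L h" "pos L h \<le> L - 1" using I nf Some by (auto simp: Inv_def)
      have pm: "(pos L h + L - 1) mod L = pos L h - 1" using predmod[of "pos L h" L] v by simp
      have "a = None \<or> a = Some (pos L h - 1)"
        using a euler_Some[of h e0 L A] Some False pm by (auto split: if_splits)
      moreover have "move L (pos L h) (Some (pos L h - 1)) = pos L h - 1" using v by (simp add: move_def)
      ultimately show ?thesis using Some e0 v by (auto simp: Inv_def)
    qed
  qed
qed


lemma Psi_None_step:
  assumes "first_move h = None" "\<not> found e h"
  shows "Psi p L e (h @ [(A, None)]) = val p L"
  using assms by (simp add: Psi_def)

lemma Psi_None_0:
  assumes L2: "L \<ge> 2" and "first_move h = None"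
  shows "Psi p L e (h @ [(A, Some 0)]) = real e / p"
  using assms first_move_None_found[OF assms(2)] first_move_None_pos[OF assms(2)]
  by (auto simp: Psi_def move_def)

lemma Psi_None_L:
  assumes L2: "L \<ge> 2" and "first_move h = None" "e < L"
  shows "Psi p L e (h @ [(A, Some (L - 1))]) = (real L - 1 - real e) / p"
proof -
  have "\<not> found e h" "pos L h = 0" using assms first_move_None_found first_move_None_pos by auto
  moreover have "L - 1 \<noteq> 0" using L2 by simp
  moreover have "move L 0 (Some (L - 1)) = L - 1" using L2 by (simp add: move_def)
  ultimately show ?thesis using assms by (cases "e = L - 1") (auto simp: Psi_def of_nat_diff)
qed

lemma int_pmf_of_set2:
  assumes "a \<noteq> b" "0 \<le> f a" "0 \<le> f b"
  shows "(\<integral>\<^sup>+x. ennreal (f x) \<partial>pmf_of_set {a, b}) = ennreal ((f a + f b) / 2)"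
proof -
  have "(\<integral>\<^sup>+x. ennreal (f x) \<partial>pmf_of_set {a, b}) = (ennreal (f a) + ennreal (f b)) / 2"
    using assms by (subst nn_integral_pmf_of_set) auto
  also have "\<dots> = ennreal (f a + f b) / ennreal 2" using assms by (simp add: ennreal_plus)
  also have "\<dots> = ennreal ((f a + f b) / 2)" using assms by (intro divide_ennreal) auto
  finally show ?thesis .
qed

lemma val_eq:
  assumes "0 < p" "p \<le> 1"
  shows "val p L = val p L * (1 - p) * (1 - p) + 1 + (real L - 1) * (2 - p) / 2"
proof -
  have q: "1 - (1 - p)^2 = p * (2 - p)" by (simp add: power2_eq_square algebra_simps)
  have "val p L * (p * (2 - p)) = 1 + (real L - 1) * (2 - p) / 2"
    unfolding val_def q using assms by (simp add: field_simps)
  thus ?thesis by (simp add: algebra_simps)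
qed


lemma Psi_step:
  assumes L2: "L \<ge> 2" and p: "0 < p" "p \<le> 1" and eL: "e < L" and I: "Inv L e h"
  shows "ennreal (if found e h then 0 else 1) + (\<integral>\<^sup>+h'. ennreal (Psi p L e h') \<partial>stp p L (euler L) h)
         \<le> ennreal (Psi p L e h)"
proof -
  have stpI: "(\<integral>\<^sup>+h'. ennreal (Psi p L e h') \<partial>stp p L (euler L) h) =
     (\<integral>\<^sup>+A. (\<integral>\<^sup>+a. ennreal (Psi p L e (h @ [(A, a)])) \<partial>euler L h A) \<partial>active_pmf p L)"
    by simp
  show ?thesis
  proof (cases "found e h")
    case True
    thus ?thesis unfolding stpI by (simp add: Psi_def)
  next
    case nf: False
    show ?thesis
    proof (cases "first_move h")
      case None
      define G where "G x y = (if \<not> x \<and> \<not> y then val p L else if x \<and> \<not> y then real e / p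
          else if \<not> x \<and> y then (real L - 1 - real e) / p else (real e / p + (real L - 1 - real e) / p) / 2)" for x y
      have vp: "0 < val p L" using val_pos[OF L2 p] .
      have e1: "real e \<le> real L - 1" using eL by linarith
      have Gnn: "0 \<le> G x y" for x y unfolding G_def using vp p e1 by auto
      have inner: "(\<integral>\<^sup>+a. ennreal (Psi p L e (h @ [(A, a)])) \<partial>euler L h A) = ennreal (G (A 0) (A (L - 1)))" for A
      proof -
        have L0: "(0::nat) \<noteq> L - 1" using L2 by simp
        show ?thesis
          using Psi_None_step[OF None nf] Psi_None_0[OF L2 None] Psi_None_L[OF L2 None eL] L0
            int_pmf_of_set2[OF L0, of "\<lambda>x. Psi p L e (h @ [(A, Some x)])"] p e1
          by (simp add: euler_None[OF L2 None] G_def)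
      qed
      have "(\<integral>\<^sup>+h'. ennreal (Psi p L e h') \<partial>stp p L (euler L) h) = (\<integral>\<^sup>+A. ennreal (G (A 0) (A (L - 1))) \<partial>active_pmf p L)"
        unfolding stpI inner ..
      also have "\<dots> = ennreal (G True True * p * p + G True False * p * (1 - p) + G False True * (1 - p) * p + G False False * (1 - p) * (1 - p))"
        using L2 p Gnn by (intro int2) auto
      also have "G True True * p * p + G True False * p * (1 - p) + G False True * (1 - p) * p + G False False * (1 - p) * (1 - p)
          = val p L * (1 - p) * (1 - p) + (real L - 1) * (1 - p) + p * (real L - 1) / 2"
        unfolding G_def using p by (simp add: field_simps)
      finally have X: "(\<integral>\<^sup>+h'. ennreal (Psi p L e h') \<partial>stp p L (euler L) h) = ennreal (val p L * (1 - p) * (1 - p) + (real L - 1) * (1 - p) + p * (real L - 1) / 2)" .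
      have nn: "0 \<le> val p L * (1 - p) * (1 - p) + (real L - 1) * (1 - p) + p * (real L - 1) / 2"
        using vp p L2 by (intro add_nonneg_nonneg mult_nonneg_nonneg) auto
      have "1 + (val p L * (1 - p) * (1 - p) + (real L - 1) * (1 - p) + p * (real L - 1) / 2) = val p L"
      proof -
        have "1 + (val p L * (1 - p) * (1 - p) + (real L - 1) * (1 - p) + p * (real L - 1) / 2)
            = val p L * (1 - p) * (1 - p) + 1 + (real L - 1) * (2 - p) / 2"
          by (simp add: field_simps)
        also have "\<dots> = val p L" using val_eq[OF p, of L] by simp
        finally show ?thesis .
      qed
      hence "ennreal 1 + ennreal (val p L * (1 - p) * (1 - p) + (real L - 1) * (1 - p) + p * (real L - 1) / 2) = ennreal (val p L)"
        using nn by (simp add: ennreal_plus[symmetric] del: ennreal_1)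
      thus ?thesis using nf None unfolding X by (simp add: Psi_def)
    next
      case (Some e0)
      show ?thesis
      proof (cases "e0 = 0")
        case True
        define v where "v = pos L h"
        have v: "1 \<le> v" "v \<le> e" using I nf Some True by (auto simp: Inv_def v_def)
        have vL: "v < L" using v eL by simp
        define G where "G b = (if b then (real e - real v) / p else (real e + 1 - real v) / p)" for b
        have Gnn: "0 \<le> G b" for b unfolding G_def using v p by auto
        have P1: "Psi p L e (h @ [(A, Some v)]) = (real e - real v) / p" for A
        proof (cases "v = e")
          case True thus ?thesis by (simp add: Psi_def)
        next
          case False
          hence "move L v (Some v) = v + 1" using v eL by (simp add: move_def)
          thus ?thesis using False nf Some \<open>e0 = 0\<close> by (simp add: Psi_def v_def[symmetric])
        qed
        have P2: "Psi p L e (h @ [(A, None)]) = (real e + 1 - real v) / p" for A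
          using nf Some True by (simp add: Psi_def v_def)
        have inner: "(\<integral>\<^sup>+a. ennreal (Psi p L e (h @ [(A, a)])) \<partial>euler L h A) = ennreal (G (A v))" for A
          using P1 P2 Some True by (simp add: euler_Some0 v_def[symmetric] G_def)
        have "(\<integral>\<^sup>+h'. ennreal (Psi p L e h') \<partial>stp p L (euler L) h) = (\<integral>\<^sup>+A. ennreal (G (A v)) \<partial>active_pmf p L)"
          unfolding stpI inner ..
        also have "\<dots> = ennreal (G True * p + G False * (1 - p))"
          using vL p Gnn by (intro int1) auto
        finally have X: "(\<integral>\<^sup>+h'. ennreal (Psi p L e h') \<partial>stp p L (euler L) h) = ennreal (G True * p + G False * (1 - p))" .
        have nn: "0 \<le> G True * p + G False * (1 - p)" using Gnn p by simp
        have "1 + (G True * p + G False * (1 - p)) = (real e + 1 - real v) / p"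
          unfolding G_def using p by (simp add: field_simps)
        hence "ennreal 1 + ennreal (G True * p + G False * (1 - p)) = ennreal ((real e + 1 - real v) / p)"
          using nn by (simp add: ennreal_plus[symmetric] del: ennreal_1)
        thus ?thesis using nf Some True unfolding X by (simp add: Psi_def v_def)
      next
        case False
        define v where "v = pos L h"
        have e0: "e0 = L - 1" and v: "e < v" "v \<le> L - 1" using I nf Some False by (auto simp: Inv_def v_def)
        have pm: "(v + L - 1) mod L = v - 1" using predmod[of v L] v by simp
        define G where "G b = (if b then (real v - 1 - real e) / p else (real v - real e) / p)" for b
        have Gnn: "0 \<le> G b" for b unfolding G_def using v p by auto
        have FL: "first_move h \<noteq> Some 0" using Some False by simp
        have P1: "Psi p L e (h @ [(A, Some (v - 1))]) = (real v - 1 - real e) / p" for A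
        proof (cases "v - 1 = e")
          case True
          have ve: "v = Suc e" using True v by simp
          show ?thesis using True ve by (simp add: Psi_def)
        next
          case False
          have "move L v (Some (v - 1)) = v - 1" using v by (simp add: move_def)
          thus ?thesis using False nf FL Some v by (simp add: Psi_def v_def[symmetric] of_nat_diff)
        qed
        have P2: "Psi p L e (h @ [(A, None)]) = (real v - real e) / p" for A
          using nf Some FL by (simp add: Psi_def v_def)
        have inner: "(\<integral>\<^sup>+a. ennreal (Psi p L e (h @ [(A, a)])) \<partial>euler L h A) = ennreal (G (A (v - 1)))" for A
          using P1 P2 Some False pm by (simp add: euler_Some v_def[symmetric] G_def)
        have "(\<integral>\<^sup>+h'. ennreal (Psi p L e h') \<partial>stp p L (euler L) h) = (\<integral>\<^sup>+A. ennreal (G (A (v - 1))) \<partial>active_pmf p L)"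
          unfolding stpI inner ..
        also have "\<dots> = ennreal (G True * p + G False * (1 - p))"
          using v p Gnn by (intro int1) auto
        finally have X: "(\<integral>\<^sup>+h'. ennreal (Psi p L e h') \<partial>stp p L (euler L) h) = ennreal (G True * p + G False * (1 - p))" .
        have nn: "0 \<le> G True * p + G False * (1 - p)" using Gnn p by simp
        have "1 + (G True * p + G False * (1 - p)) = (real v - real e) / p"
          unfolding G_def using p by (simp add: field_simps)
        hence "ennreal 1 + ennreal (G True * p + G False * (1 - p)) = ennreal ((real v - real e) / p)"
          using nn by (simp add: ennreal_plus[symmetric] del: ennreal_1)
        thus ?thesis using nf Some FL unfolding X by (simp add: Psi_def v_def)
      qed
    qed
  qed
qed




lemma prob_int: "ennreal (measure_pmf.prob M {h. \<not> found e h}) = (\<integral>\<^sup>+h. ennreal (if found e h then 0 else 1) \<partial>M)"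
proof -
  have "ennreal (measure_pmf.prob M {h. \<not> found e h}) = emeasure (measure_pmf M) {h. \<not> found e h}"
    by (simp add: measure_pmf.emeasure_eq_measure)
  also have "\<dots> = (\<integral>\<^sup>+h. ennreal (if \<not> found e h then 1 else 0) \<partial>M)" by (rule emeasure_int)
  also have "\<dots> = (\<integral>\<^sup>+h. ennreal (if found e h then 0 else 1) \<partial>M)" by (intro nn_integral_cong) simp
  finally show ?thesis .
qed

lemma upper_euler:
  assumes L2: "L \<ge> 2" and p: "0 < p" "p \<le> 1" and eL: "e < L"
  shows "search_time p L (euler L) e \<le> ennreal (val p L)"
proof -
  have "search_time p L (euler L) e = (\<Sum>t. \<integral>\<^sup>+h. ennreal (if found e h then 0 else 1) \<partial>hist p L (euler L) t)"
    unfolding search_time_def prob_int ..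
  also have "\<dots> \<le> ennreal (Psi p L e [])"
  proof (rule pot_upper[where I="Inv L e"])
    show "Inv L e []" by (simp add: Inv_def)
    show "Inv L e (h @ [(A, a)])" if "Inv L e h" "a \<in> set_pmf (euler L h A)" for h A a
      using inv_pres[OF L2 eL that] .
    show "ennreal (if found e h then 0 else 1) + (\<integral>\<^sup>+h'. ennreal (Psi p L e h') \<partial>stp p L (euler L) h) \<le> ennreal (Psi p L e h)"
      if "Inv L e h" for h
      using Psi_step[OF L2 p eL that] .
  qed
  also have "Psi p L e [] = val p L" by (simp add: Psi_def)
  finally show ?thesis .
qed

lemma ucnt_sum: "ucnt L h = (\<Sum>e<L. if found e h then 0 else 1) / real L"
proof -
  have "real (card {e\<in>{..<L}. \<not> found e h}) = (\<Sum>e\<in>{e\<in>{..<L}. \<not> found e h}. 1)" by simp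
  also have "\<dots> = (\<Sum>e<L. if found e h then 0 else 1)"
    by (subst sum.inter_filter) (auto intro!: sum.cong)
  finally show ?thesis unfolding ucnt_def by simp
qed

lemma payoff_uniform:
  assumes L2: "L \<ge> 2"
  shows "payoff p L \<sigma> (pmf_of_set {..<L}) = (\<Sum>t. \<integral>\<^sup>+h. ennreal (ucnt L h) \<partial>hist p L \<sigma> t)"
proof -
  define P where "P t e = ennreal (measure_pmf.prob (hist p L \<sigma> t) {h. \<not> found e h})" for t e
  have "0 \<in> {..<L}" using L2 by simp
  hence ne: "{..<L} \<noteq> {}" by blast
  have "payoff p L \<sigma> (pmf_of_set {..<L}) = (\<Sum>e<L. search_time p L \<sigma> e) / of_nat L"
    unfolding payoff_def using ne by (subst nn_integral_pmf_of_set) auto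
  also have "(\<Sum>e<L. search_time p L \<sigma> e) = (\<Sum>t. \<Sum>e<L. P t e)"
    unfolding search_time_def P_def by (rule suminf_sum[symmetric]) (rule summableI)
  also have "(\<Sum>t. \<Sum>e<L. P t e) / of_nat L = (\<Sum>t. (\<Sum>e<L. P t e) / of_nat L)"
    by (rule ennreal_suminf_divide[symmetric])
  also have "(\<lambda>t. (\<Sum>e<L. P t e) / of_nat L) = (\<lambda>t. \<integral>\<^sup>+h. ennreal (ucnt L h) \<partial>hist p L \<sigma> t)"
  proof
    fix t
    have "(\<integral>\<^sup>+h. ennreal (ucnt L h) \<partial>hist p L \<sigma> t)
        = (\<integral>\<^sup>+h. (\<Sum>e<L. ennreal (if found e h then 0 else 1)) * inverse (of_nat L) \<partial>hist p L \<sigma> t)"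
    proof (intro nn_integral_cong)
      fix h
      have "ennreal (ucnt L h) = ennreal (\<Sum>e<L. if found e h then 0 else 1) / ennreal (real L)"
        unfolding ucnt_sum using L2 by (intro divide_ennreal[symmetric]) (auto intro!: sum_nonneg)
      also have "\<dots> = (\<Sum>e<L. ennreal (if found e h then 0 else 1)) * inverse (of_nat L)"
        by (simp add: divide_ennreal_def ennreal_of_nat_eq_real_of_nat)
      finally show "ennreal (ucnt L h) = (\<Sum>e<L. ennreal (if found e h then 0 else 1)) * inverse (of_nat L)" .
    qed
    also have "\<dots> = (\<Sum>e<L. \<integral>\<^sup>+h. ennreal (if found e h then 0 else 1) \<partial>hist p L \<sigma> t) * inverse (of_nat L)"
      by (subst nn_integral_multc) (simp_all add: nn_integral_sum del: sum_ennreal)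
    also have "\<dots> = (\<Sum>e<L. P t e) / of_nat L"
      by (simp add: P_def prob_int divide_ennreal_def)
    finally show "(\<Sum>e<L. P t e) / of_nat L = (\<integral>\<^sup>+h. ennreal (ucnt L h) \<partial>hist p L \<sigma> t)" ..
  qed
  finally show ?thesis .
qed




lemma lower_any:
  assumes L2: "L \<ge> 2" and p: "0 < p" "p \<le> 1" and ss: "searcher_strategy L \<sigma>"
  shows "ennreal (val p L) \<le> payoff p L \<sigma> (pmf_of_set {..<L})"
proof -
  have vp: "0 < val p L" using val_pos[OF L2 p] .
  have "ennreal (Phi p L (kf L [])) \<le> (\<Sum>t. \<integral>\<^sup>+h. ennreal (ucnt L h) \<partial>hist p L \<sigma> t)"
  proof (rule pot_lower[where I="legal_hist L" and M="ennreal (real L * val p L)"])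
    show "legal_hist L []" by simp
    show "legal_hist L (h @ [(A, a)])" if "legal_hist L h" "a \<in> set_pmf (\<sigma> h A)" for h A a
      using that ss unfolding searcher_strategy_def by simp
    show "ennreal (Phi p L (kf L h)) \<le> ennreal (ucnt L h) + (\<integral>\<^sup>+h'. ennreal (Phi p L (kf L h')) \<partial>stp p L \<sigma> h)"
      if "legal_hist L h" for h
      using lower_step[OF L2 p ss that] .
    show "ennreal (real L * val p L) < top" by simp
    show "ennreal (ucnt L h) \<le> 1" for h
    proof -
      have "ucnt L h \<le> 1" unfolding ucnt_eq using L2 by (simp add: divide_le_eq_1)
      thus ?thesis by (simp add: ennreal_le_1)
    qed
    show "ennreal (Phi p L (kf L h)) \<le> ennreal (real L * val p L) * ennreal (ucnt L h)" for h
    proof -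
      define k where "k = kf L h"
      have kL: "k \<le> L" unfolding k_def by (rule kf_le)
      have u: "ucnt L h = (real L - real k) / real L" unfolding ucnt_eq k_def ..
      have "Phi p L k \<le> real L * val p L * ucnt L h"
      proof (cases "k = L")
        case True thus ?thesis using L2 vp u by (simp add: Phi_L)
      next
        case False
        hence "1 \<le> real L - real k" using kL by linarith
        hence "val p L \<le> val p L * (real L - real k)" using vp by simp
        moreover have "real L * val p L * ucnt L h = val p L * (real L - real k)" using L2 u by simp
        ultimately show ?thesis using Phi_le_val[OF L2 p kL] by linarith
      qed
      hence "ennreal (Phi p L k) \<le> ennreal (real L * val p L * ucnt L h)" by (rule ennreal_leI)
      also have "\<dots> = ennreal (real L * val p L) * ennreal (ucnt L h)"
        using vp L2 by (intro ennreal_mult) (auto simp: ucnt_def)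
      finally show ?thesis unfolding k_def .
    qed
  qed
  moreover have "Phi p L (kf L []) = val p L" by (simp add: kf_def Phi_def)
  ultimately show ?thesis using payoff_uniform[OF L2] by simp
qed

lemma uniform_hider: "L \<ge> 2 \<Longrightarrow> hider_strategy L (pmf_of_set {..<L})"
proof -
  assume "L \<ge> 2"
  hence "0 \<in> {..<L}" by simp
  hence "{..<L} \<noteq> {}" by blast
  thus ?thesis unfolding hider_strategy_def by simp
qed

lemma sup_euler:
  assumes L2: "L \<ge> 2" and p: "0 < p" "p \<le> 1"
  shows "(\<Squnion>q \<in> {q. hider_strategy L q}. payoff p L (euler L) q) \<le> ennreal (val p L)"
proof (rule SUP_least)
  fix q assume "q \<in> {q. hider_strategy L q}"
  hence sq: "set_pmf q \<subseteq> {..<L}" by (simp add: hider_strategy_def)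
  have "payoff p L (euler L) q \<le> (\<integral>\<^sup>+e. ennreal (val p L) \<partial>q)"
    unfolding payoff_def
  proof (rule nn_integral_mono_AE, unfold AE_measure_pmf_iff, intro ballI)
    fix e assume "e \<in> set_pmf q"
    hence "e < L" using sq by auto
    thus "search_time p L (euler L) e \<le> ennreal (val p L)" by (rule upper_euler[OF L2 p])
  qed
  also have "\<dots> = ennreal (val p L)" by simp
  finally show "payoff p L (euler L) q \<le> ennreal (val p L)" .
qed

theorem mainTheorem17:
  fixes L :: nat and p :: real
  assumes "L \<ge> 2" and "0 < p" and "p \<le> 1"
  shows "lower_value p L = ennreal (1 / (1 - (1 - p)^2) + (real L - 1) / (2 * p))
       \<and> upper_value p L = ennreal (1 / (1 - (1 - p)^2) + (real L - 1) / (2 * p))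
       \<and> hider_strategy L (pmf_of_set {..<L})
       \<and> (\<Sqinter>\<sigma> \<in> {\<sigma>. searcher_strategy L \<sigma>}. payoff p L \<sigma> (pmf_of_set {..<L}))
           = ennreal (1 / (1 - (1 - p)^2) + (real L - 1) / (2 * p))
       \<and> searcher_strategy L (euler L)
       \<and> (\<Squnion>q \<in> {q. hider_strategy L q}. payoff p L (euler L) q)
           = ennreal (1 / (1 - (1 - p)^2) + (real L - 1) / (2 * p))"
proof -
  note L2 = assms(1) and p = assms(2,3)
  define V where "V = ennreal (val p L)"
  have Veq: "ennreal (1 / (1 - (1 - p)^2) + (real L - 1) / (2 * p)) = V" unfolding V_def val_def ..
  define S where "S = {\<sigma>. searcher_strategy L \<sigma>}"
  define H where "H = {q. hider_strategy L q}"
  define U where "U = pmf_of_set {..<L}"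
  have HU: "U \<in> H" unfolding H_def U_def using uniform_hider[OF L2] by simp
  have SE: "euler L \<in> S" unfolding S_def using euler_legal[OF L2] by simp
  have low: "V \<le> payoff p L \<sigma> U" if "\<sigma> \<in> S" for \<sigma>
    using lower_any[OF L2 p, of \<sigma>] that unfolding S_def U_def V_def by simp
  have supE: "(\<Squnion>q \<in> H. payoff p L (euler L) q) \<le> V" unfolding H_def V_def by (rule sup_euler[OF L2 p])
  have infU_ge: "V \<le> (\<Sqinter>\<sigma> \<in> S. payoff p L \<sigma> U)" by (rule INF_greatest) (rule low)
  have eU: "payoff p L (euler L) U \<le> (\<Squnion>q \<in> H. payoff p L (euler L) q)" by (rule SUP_upper[OF HU])
  have infU_le: "(\<Sqinter>\<sigma> \<in> S. payoff p L \<sigma> U) \<le> payoff p L (euler L) U" by (rule INF_lower[OF SE])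
  have infU: "(\<Sqinter>\<sigma> \<in> S. payoff p L \<sigma> U) = V"
    using infU_ge infU_le eU supE by (meson antisym order_trans)
  have supEq: "(\<Squnion>q \<in> H. payoff p L (euler L) q) = V"
    using supE eU low[OF SE] by (meson antisym order_trans)
  have lowv: "V \<le> lower_value p L"
  proof -
    have "(\<Sqinter>\<sigma> \<in> S. payoff p L \<sigma> U) \<le> lower_value p L"
      unfolding lower_value_def S_def[symmetric] H_def[symmetric] by (rule SUP_upper[OF HU])
    thus ?thesis using infU by simp
  qed
  have upv: "upper_value p L \<le> V"
  proof -
    have "upper_value p L \<le> (\<Squnion>q \<in> H. payoff p L (euler L) q)"
      unfolding upper_value_def S_def[symmetric] H_def[symmetric] by (rule INF_lower[OF SE])
    thus ?thesis using supE by simp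
  qed
  have minimax: "lower_value p L \<le> upper_value p L"
    unfolding lower_value_def upper_value_def
  proof (rule SUP_least)
    fix q assume q: "q \<in> {q. hider_strategy L q}"
    show "(\<Sqinter>\<sigma> \<in> {\<sigma>. searcher_strategy L \<sigma>}. payoff p L \<sigma> q)
        \<le> (\<Sqinter>\<sigma> \<in> {\<sigma>. searcher_strategy L \<sigma>}. \<Squnion>q \<in> {q. hider_strategy L q}. payoff p L \<sigma> q)"
      by (rule INF_mono) (use q in \<open>auto intro!: SUP_upper\<close>)
  qed
  have lv: "lower_value p L = V" using lowv upv minimax by (meson antisym order_trans)
  have uv: "upper_value p L = V" using lowv upv minimax by (meson antisym order_trans)
  show ?thesis
    unfolding Veq using lv uv uniform_hider[OF L2] infU euler_legal[OF L2] supEq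
    unfolding S_def H_def U_def by simp
qed


end
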